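(* Let $q\in\mathbb{N}$, $f\in H_q$, and let $\psi\in\mathcal{P}_q$ have modulus $q_0$. The following are equivalent: (1) $f\in E_{q,\psi}$; (2) $f(n)=f(\widehat n)\psi(\frac n{\widehat n})$ for every $n\ge1$, where $\widehat n=\gcd(n,\frac q{q_0})$; (3) $(f\ast\mu\psi)(n)=0$ whenever $n\nmid\frac q{q_0}$; (4) $D_f(s)=P(s)L(s,\psi)$ for some Dirichlet polynomial $P$.
   Context: $H_q$ is the space of $q$-periodic arithmetical functions $f:\mathbb{N}\to\mathbb{C}$. A Dirichlet character mod $m$ is a completely multiplicative $m$-periodic function with $\chi(n)\ne0$ iff $\gcd(n,m)=1$; $\psi$ mod $d$ induces $\chi$ mod $m$ if $d\mid m$ and $\chi=\psi\chi_m$ with $\chi_m$ principal mod $m$; primitive means not induced by a character of modulus a proper divisor. $\mathcal{P}_q$ is the set of primitive Dirichlet characters whose modulus divides $q$. For $d\mid q$ and a character $\chi$ mod $\frac qd$, $\xi_\chi(n)=\chi(\frac nd)$ if $d\mid n$ and $0$ otherwise. For $\psi\in\mathcal{P}_q$ of modulus $q_0$, $E_{q,\psi}$ is the span of $\{\xi_{\psi_{q/d}}:d\mid\frac q{q_0}\}$, where $\psi_{q/d}$ is the character mod $\frac qd$ induced by $\psi$. $\mu$ is the Möbius function, $(f\ast h)(n)=\sum_{d\mid n}f(\frac nd)h(d)$, $\mu\psi$ is the pointwise product, $D_f(s)=\sum_{n\ge1}f(n)n^{-s}$, and $L(s,\psi)=D_\psi(s)$ (on $\mathrm{Re}\,s>1$).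 *)

theory Defs
  imports "HOL-Analysis.Analysis" "HOL-Computational_Algebra.Squarefree"
begin

(* Arithmetical functions are functions nat => complex; only arguments n >= 1 matter
   (the value at 0 is irrelevant and unconstrained). *)

definition periodic_arith :: "nat \<Rightarrow> (nat \<Rightarrow> complex) \<Rightarrow> bool" where
  "periodic_arith q f \<longleftrightarrow> (\<forall>n\<ge>1. f (n + q) = f n)"

definition dirichlet_char :: "nat \<Rightarrow> (nat \<Rightarrow> complex) \<Rightarrow> bool" where
  "dirichlet_char m chi \<longleftrightarrow> m > 0 \<and> (\<forall>a b. chi (a * b) = chi a * chi b)
     \<and> (\<forall>n. chi (n + m) = chi n) \<and> (\<forall>n. chi n \<noteq> 0 \<longleftrightarrow> coprime n m)"

definition principal_char :: "nat \<Rightarrow> nat \<Rightarrow> complex" where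
  "principal_char m n = (if coprime n m then 1 else 0)"

definition induces :: "nat \<Rightarrow> (nat \<Rightarrow> complex) \<Rightarrow> nat \<Rightarrow> (nat \<Rightarrow> complex) \<Rightarrow> bool" where
  "induces d \<psi> m chi \<longleftrightarrow> d dvd m \<and> (\<forall>n. chi n = \<psi> n * principal_char m n)"

definition primitive_char :: "nat \<Rightarrow> (nat \<Rightarrow> complex) \<Rightarrow> bool" where
  "primitive_char d chi \<longleftrightarrow> dirichlet_char d chi \<and>
     (\<forall>d' \<psi>. d' dvd d \<and> d' \<noteq> d \<and> dirichlet_char d' \<psi> \<longrightarrow> \<not> induces d' \<psi> d chi)"

definition induced_char :: "(nat \<Rightarrow> complex) \<Rightarrow> nat \<Rightarrow> nat \<Rightarrow> complex" where
  "induced_char \<psi> m n = \<psi> n * principal_char m n"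

definition xi :: "nat \<Rightarrow> (nat \<Rightarrow> complex) \<Rightarrow> nat \<Rightarrow> complex" where
  "xi d chi n = (if d dvd n then chi (n div d) else 0)"

(* f \<in> E_{q,\<psi>} (\<psi> of modulus q0): f is a linear combination of the \<xi>_{\<psi>_{q/d}}, d | q/q0,
   as functions on the positive integers *)
definition in_E :: "nat \<Rightarrow> nat \<Rightarrow> (nat \<Rightarrow> complex) \<Rightarrow> (nat \<Rightarrow> complex) \<Rightarrow> bool" where
  "in_E q q0 \<psi> f \<longleftrightarrow> (\<exists>c :: nat \<Rightarrow> complex. \<forall>n\<ge>1.
      f n = (\<Sum>d | d dvd (q div q0). c d * xi d (induced_char \<psi> (q div d)) n))"

definition mobius_mu :: "nat \<Rightarrow> complex" where
  "mobius_mu n = (if n > 0 \<and> squarefree n then (-1) ^ card (prime_factors n) else 0)"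

definition dconv :: "(nat \<Rightarrow> complex) \<Rightarrow> (nat \<Rightarrow> complex) \<Rightarrow> nat \<Rightarrow> complex" where
  "dconv f h n = (\<Sum>d | d dvd n. f (n div d) * h d)"

definition dseries :: "(nat \<Rightarrow> complex) \<Rightarrow> complex \<Rightarrow> complex" where
  "dseries f s = (\<Sum>n. f (Suc n) / of_nat (Suc n) powr s)"

definition dpoly :: "(nat \<Rightarrow> complex) \<Rightarrow> nat \<Rightarrow> complex \<Rightarrow> complex" where
  "dpoly a N s = (\<Sum>n=1..N. a n / of_nat n powr s)"

end

theory Submission
  imports Defs
begin

lemma dc_basic:
  assumes "dirichlet_char m chi"
  shows "chi 1 = 1" "chi (a*b) = chi a * chi b" "m > 0" "chi n \<noteq> 0 \<longleftrightarrow> coprime n m"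
proof -
  have "chi 1 \<noteq> 0" using assms unfolding dirichlet_char_def by auto
  moreover have "chi 1 = chi 1 * chi 1" using assms unfolding dirichlet_char_def
    by (metis mult_1)
  ultimately show "chi 1 = 1" by (metis mult_cancel_left1)
qed (use assms in \<open>auto simp: dirichlet_char_def\<close>)

lemma dc_mod:
  assumes "dirichlet_char m chi"
  shows "chi n = chi (n mod m)"
proof -
  have "chi (r + k*m) = chi r" for r k
  proof (induction k)
    case (Suc k)
    have "chi (r + Suc k * m) = chi ((r + k*m) + m)" by (simp add: algebra_simps)
    also have "\<dots> = chi (r + k*m)" using assms by (simp add: dirichlet_char_def)
    finally show ?case using Suc by simp
  qed simp
  from this[of "n mod m" "n div m"] show ?thesis by (metis mod_div_mult_eq)
qed

lemma dc_cong:
  assumes "dirichlet_char m chi" "a mod m = b mod m"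
  shows "chi a = chi b"
  using dc_mod[OF assms(1)] assms(2) by metis

lemma dc_bounded:
  assumes "dirichlet_char m chi"
  shows "\<exists>B. \<forall>n. norm (chi n) \<le> B"
proof -
  have "m > 0" using assms dc_basic by blast
  let ?B = "Max ((\<lambda>k. norm (chi k)) ` {..<m})"
  have "norm (chi n) \<le> ?B" for n
  proof -
    have "n mod m \<in> {..<m}" using \<open>m>0\<close> by simp
    hence "norm (chi (n mod m)) \<le> ?B" by (intro Max_ge) auto
    thus ?thesis using dc_mod[OF assms] by metis
  qed
  thus ?thesis by blast
qed

lemma periodic_cong:
  assumes "periodic_arith q f" "a \<ge> 1" "b \<ge> 1" "a mod q = b mod q"
  shows "f a = f b"
proof -
  have step: "f (r + k*q) = f r" if "r \<ge> 1" for r k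
  proof (induction k)
    case (Suc k)
    have "f (r + Suc k * q) = f ((r + k*q) + q)" by (simp add: algebra_simps)
    also have "\<dots> = f (r + k*q)" using assms(1) that by (simp add: periodic_arith_def)
    finally show ?case using Suc by simp
  qed simp
  have "f a = f b" if "a \<le> b" "a \<ge> 1" "a mod q = b mod q" for a b
  proof -
    have "q dvd b - a" using that mod_eq_dvd_iff_nat[of a b q] by simp
    then obtain k where "b - a = q*k" by (elim dvdE)
    hence "b = a + k*q" using that(1) by (simp add: algebra_simps)
    thus ?thesis using step that by metis
  qed
  thus ?thesis using assms by (metis nat_le_linear)
qed

lemma periodic_bounded:
  assumes "periodic_arith q f" "q \<ge> 1"
  shows "\<exists>B. \<forall>n\<ge>1. norm (f n) \<le> B"
proof -
  let ?B = "Max ((\<lambda>k. norm (f k)) ` {1..q})"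
  have "norm (f n) \<le> ?B" if "n \<ge> 1" for n
  proof -
    define r where "r = (if n mod q = 0 then q else n mod q)"
    have "r \<in> {1..q}" using assms(2) unfolding r_def
      by (auto simp: Suc_le_eq)
    moreover have "r mod q = n mod q" unfolding r_def by auto
    ultimately have "f n = f r" using periodic_cong[OF assms(1) that] by auto
    moreover have "norm (f r) \<le> ?B" using \<open>r \<in> {1..q}\<close> by (intro Max_ge) auto
    ultimately show ?thesis by simp
  qed
  thus ?thesis by blast
qed


lemma dconv_cong:
  assumes "\<And>d. d dvd n \<Longrightarrow> a (n div d) = a' (n div d)" "\<And>d. d dvd n \<Longrightarrow> b d = b' d"
  shows "dconv a b n = dconv a' b' n"
  unfolding dconv_def using assms by (intro sum.cong) auto

lemma dconv_comm:
  assumes "n > 0"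
  shows "dconv a b n = dconv b a n"
  unfolding dconv_def
  by (rule sum.reindex_bij_witness[where i="\<lambda>d. n div d" and j="\<lambda>d. n div d"])
     (use assms in \<open>auto simp: div_div_eq_right dvd_div_mult_self intro: dvd_div_mult_self\<close>)

lemma dconv_assoc:
  assumes "n > 0"
  shows "dconv (dconv a b) c n = dconv a (dconv b c) n"
proof -
  have fin: "finite {d. d dvd n}" using assms by simp
  have "dconv (dconv a b) c n = (\<Sum>d | d dvd n. \<Sum>e | e dvd n div d. a (n div d div e) * b e * c d)"
    unfolding dconv_def by (simp add: sum_distrib_right)
  also have "\<dots> = (\<Sum>(d,e) \<in> (SIGMA d:{d. d dvd n}. {e. e dvd n div d}). a (n div d div e) * b e * c d)"
    using assms by (intro sum.Sigma) auto
  also have "\<dots> = (\<Sum>(d,e) \<in> (SIGMA d:{d. d dvd n}. {e. e dvd d}). a (n div d) * b (d div e) * c e)"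
  proof (rule sum.reindex_bij_witness[where j="\<lambda>(d,e). (d*e, d)" and i="\<lambda>(d,e). (e, d div e)"])
    fix x assume x: "x \<in> (SIGMA d:{d. d dvd n}. {e. e dvd n div d})"
    then obtain d e where xe: "x = (d,e)" and de: "d dvd n" "e dvd n div d" by auto
    have "d > 0" using de assms by (auto intro: dvd_pos_nat)
    show "(\<lambda>(d, e). (e, d div e)) ((\<lambda>(d, e). (d * e, d)) x) = x" using \<open>d > 0\<close> xe by auto
    have "d*e dvd d * (n div d)" using de(2) by (rule mult_dvd_mono[OF dvd_refl])
    hence "d*e dvd n" using de(1) by simp
    thus "(\<lambda>(d, e). (d * e, d)) x \<in> (SIGMA d:{d. d dvd n}. {e. e dvd d})"
      using xe by auto
    have "n div d div e = n div (d*e)" by (simp add: div_mult2_eq)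
    thus "(case (\<lambda>(d, e). (d * e, d)) x of (d, e) \<Rightarrow> a (n div d) * b (d div e) * c e) =
          (case x of (d, e) \<Rightarrow> a (n div d div e) * b e * c d)"
      using xe \<open>d > 0\<close> by simp
  next
    fix y assume y: "y \<in> (SIGMA d:{d. d dvd n}. {e. e dvd d})"
    then obtain d e where ye: "y = (d,e)" and de: "d dvd n" "e dvd d" by auto
    show "(\<lambda>(d, e). (d * e, d)) ((\<lambda>(d, e). (e, d div e)) y) = y" using de ye by auto
    show "(\<lambda>(d, e). (e, d div e)) y \<in> (SIGMA d:{d. d dvd n}. {e. e dvd n div d})"
      using de assms ye by (auto intro: dvd_trans simp: div_div_div_same dvd_div_iff_mult)
  qed
  also have "\<dots> = (\<Sum>d | d dvd n. \<Sum>e | e dvd d. a (n div d) * b (d div e) * c e)"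
    using assms by (intro sum.Sigma[symmetric]) auto
  also have "\<dots> = dconv a (dconv b c) n"
    unfolding dconv_def by (simp add: sum_distrib_left mult.assoc)
  finally show ?thesis .
qed

lemma dconv_delta:
  assumes "n > 0"
  shows "dconv a (\<lambda>d. if d = 1 then 1 else 0) n = a n"
proof -
  have "dconv a (\<lambda>d. if d = 1 then 1 else 0) n = (\<Sum>d | d dvd n. if d = 1 then a n else 0)"
    unfolding dconv_def by (intro sum.cong) auto
  also have "\<dots> = a n" using assms by (subst sum.delta) auto
  finally show ?thesis .
qed


lemma mu_one: "mobius_mu 1 = 1"
  by (simp add: mobius_mu_def)

lemma mu_prime_mult:
  assumes p: "prime (p::nat)" and d: "d > 0"
  shows "mobius_mu (p*d) = (if p dvd d then 0 else - mobius_mu d)"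
proof (cases "p dvd d")
  case True
  then obtain k where "d = p*k" by (elim dvdE)
  hence "p^2 dvd p*d" by (simp add: power2_eq_square)
  moreover have "\<not> p dvd 1" using p by (metis nat_dvd_1_iff_1 not_prime_1)
  ultimately have "\<not> squarefree (p*d)" by (metis not_squarefreeI)
  thus ?thesis using True by (simp add: mobius_mu_def)
next
  case False
  have cop: "coprime p d" using False p by (simp add: prime_imp_coprime)
  have sq: "squarefree (p*d) \<longleftrightarrow> squarefree d"
    using squarefree_multD(2)[of p d] squarefree_mult_coprime[OF cop squarefree_prime[OF p]] by blast
  have "p > 0" using p prime_gt_0_nat by blast
  have pf: "prime_factors (p*d) = insert p (prime_factors d)"
    using \<open>p>0\<close> d p by (simp add: prime_factors_product prime_prime_factors)
  have "p \<notin> prime_factors d" using False by (auto dest: in_prime_factors_imp_dvd)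
  hence "card (prime_factors (p*d)) = Suc (card (prime_factors d))" unfolding pf by simp
  thus ?thesis using False sq d \<open>p>0\<close> by (simp add: mobius_mu_def)
qed

lemma mu_sum:
  assumes "n > 0"
  shows "(\<Sum>d | d dvd n. mobius_mu d) = (if n = 1 then 1 else 0)"
proof (cases "n = 1")
  case True
  thus ?thesis using mu_one by simp
next
  case False
  then obtain p where p: "prime p" "p dvd n" using assms by (metis prime_factor_nat)
  have "p > 0" using p prime_gt_0_nat by blast
  define A where "A = {d. d dvd n \<and> \<not> p dvd d}"
  define B where "B = {d. d dvd n \<and> p dvd d}"
  have fin: "finite {d. d dvd n}" using assms by simp
  have AB: "{d. d dvd n} = A \<union> B" "A \<inter> B = {}" unfolding A_def B_def by auto
  have "finite A" "finite B" using fin AB by (metis finite_Un)+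
  have split: "(\<Sum>d | d dvd n. mobius_mu d) = sum mobius_mu A + sum mobius_mu B"
    unfolding AB(1) by (rule sum.union_disjoint) fact+
  have np: "n = p * (n div p)" using p by simp
  have "n div p > 0" using assms p np by (metis gr0I mult_0_right)
  have A2: "A = {d. d dvd n div p \<and> \<not> p dvd d}"
  proof (intro set_eqI iffI)
    fix d assume "d \<in> A"
    hence "d dvd p * (n div p)" "\<not> p dvd d" unfolding A_def using np by auto
    moreover have "coprime d p" using \<open>\<not> p dvd d\<close> p(1) prime_imp_coprime[of p d] coprime_commute by blast
    ultimately show "d \<in> {d. d dvd n div p \<and> \<not> p dvd d}"
      by (simp add: coprime_dvd_mult_right_iff)
  next
    fix d assume "d \<in> {d. d dvd n div p \<and> \<not> p dvd d}"
    hence "d dvd p * (n div p)" "\<not> p dvd d" by (auto intro: dvd_mult)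
    thus "d \<in> A" unfolding A_def using np by simp
  qed
  have "sum mobius_mu B = (\<Sum>d | d dvd n div p. mobius_mu (p*d))"
  proof (rule sum.reindex_bij_witness[where j="\<lambda>d. d div p" and i="\<lambda>d. p*d"])
    fix d assume "d \<in> {d. d dvd n div p}"
    thus "p*d div p = d" "p*d \<in> B" using \<open>p>0\<close> np unfolding B_def by (auto intro: mult_dvd_mono)
  next
    fix d assume "d \<in> B"
    thus "p * (d div p) = d" "d div p \<in> {d. d dvd n div p}" unfolding B_def using \<open>p>0\<close>
      by (auto simp: div_div_div_same)
    thus "mobius_mu (p * (d div p)) = mobius_mu d" by simp
  qed
  also have "\<dots> = (\<Sum>d | d dvd n div p. if \<not> p dvd d then - mobius_mu d else 0)"
  proof (intro sum.cong refl)
    fix d assume "d \<in> {d. d dvd n div p}"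
    hence "d > 0" using \<open>n div p > 0\<close> by (auto intro: dvd_pos_nat)
    thus "mobius_mu (p * d) = (if \<not> p dvd d then - mobius_mu d else 0)"
      using mu_prime_mult[OF p(1) \<open>d > 0\<close>] by simp
  qed
  also have "\<dots> = (\<Sum>d \<in> {d \<in> {d. d dvd n div p}. \<not> p dvd d}. - mobius_mu d)"
    by (rule sum.inter_filter[symmetric]) (use \<open>n div p > 0\<close> in simp)
  also have "\<dots> = - (\<Sum>d \<in> {d \<in> {d. d dvd n div p}. \<not> p dvd d}. mobius_mu d)"
    by (rule sum_negf)
  also have "{d \<in> {d. d dvd n div p}. \<not> p dvd d} = A" using A2 by simp
  finally show ?thesis using split False by simp
qed

lemma mupsi_inv:
  assumes "dirichlet_char m \<psi>" "n > 0"
  shows "dconv \<psi> (\<lambda>k. mobius_mu k * \<psi> k) n = (if n = 1 then 1 else 0)"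
proof -
  have "dconv \<psi> (\<lambda>k. mobius_mu k * \<psi> k) n = (\<Sum>d | d dvd n. mobius_mu d * \<psi> n)"
    unfolding dconv_def
  proof (intro sum.cong refl)
    fix d assume "d \<in> {d. d dvd n}"
    hence "\<psi> n = \<psi> (n div d) * \<psi> d" using dc_basic(2)[OF assms(1)] by (metis dvd_div_mult_self mem_Collect_eq)
    thus "\<psi> (n div d) * (mobius_mu d * \<psi> d) = mobius_mu d * \<psi> n" by simp
  qed
  also have "\<dots> = \<psi> n * (\<Sum>d | d dvd n. mobius_mu d)" by (simp add: sum_distrib_left mult.commute)
  also have "\<dots> = (if n = 1 then 1 else 0)" using mu_sum[OF assms(2)] dc_basic(1)[OF assms(1)] by simp
  finally show ?thesis .
qed

lemma inv1:
  assumes "dirichlet_char m \<psi>" "n > 0"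
  shows "dconv \<psi> (dconv f (\<lambda>k. mobius_mu k * \<psi> k)) n = f n"
proof -
  have "dconv \<psi> (dconv f (\<lambda>k. mobius_mu k * \<psi> k)) n = dconv (dconv f (\<lambda>k. mobius_mu k * \<psi> k)) \<psi> n"
    using assms by (simp add: dconv_comm)
  also have "\<dots> = dconv f (dconv (\<lambda>k. mobius_mu k * \<psi> k) \<psi>) n" using assms by (simp add: dconv_assoc)
  also have "\<dots> = dconv f (\<lambda>d. if d = 1 then 1 else 0) n"
    using assms by (intro dconv_cong refl) (auto simp: dconv_comm[of _ _ \<psi>] mupsi_inv intro: dvd_pos_nat)
  also have "\<dots> = f n" by (rule dconv_delta[OF assms(2)])
  finally show ?thesis .
qed

lemma inv2:
  assumes "dirichlet_char m \<psi>" "\<forall>n>0. f n = dconv \<psi> a n" "n > 0"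
  shows "dconv f (\<lambda>k. mobius_mu k * \<psi> k) n = a n"
proof -
  have "dconv f (\<lambda>k. mobius_mu k * \<psi> k) n = dconv (dconv a \<psi>) (\<lambda>k. mobius_mu k * \<psi> k) n"
    using assms by (intro dconv_cong refl) (auto simp: dconv_comm[of _ \<psi>] intro: dvd_pos_nat)
  also have "\<dots> = dconv a (dconv \<psi> (\<lambda>k. mobius_mu k * \<psi> k)) n" using assms by (simp add: dconv_assoc)
  also have "\<dots> = dconv a (\<lambda>d. if d = 1 then 1 else 0) n"
    using assms by (intro dconv_cong refl) (auto simp: mupsi_inv intro: dvd_pos_nat)
  also have "\<dots> = a n" by (rule dconv_delta[OF assms(3)])
  finally show ?thesis .
qed


lemma div_split:
  fixes d g n :: nat
  assumes "d dvd g" "g dvd n" "d > 0"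
  shows "n div d = (n div g) * (g div d)"
proof (cases "g = 0")
  case True thus ?thesis using assms by simp
next
  case False
  obtain k where k: "g = d*k" using assms(1) by (elim dvdE)
  obtain l where l: "n = g*l" using assms(2) by (elim dvdE)
  have "n div d = k*l" using k l assms(3) by (simp add: mult.assoc)
  moreover have "g div d = k" using k assms(3) by simp
  moreover have "n div g = l" using l False by simp
  ultimately show ?thesis by simp
qed

lemma xi_eval:
  assumes dc: "dirichlet_char q0 \<psi>" and "q0 dvd q" "q > 0" "d dvd q div q0" "n \<ge> 1"
  shows "xi d (induced_char \<psi> (q div d)) n = (if d = gcd n (q div q0) then \<psi> (n div d) else 0)"
proof -
  define m where "m = q div q0"
  have q: "q = q0 * m" using assms(2) unfolding m_def by simp
  have "m > 0" using q assms(3) by (simp add: gr0I)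
  have dm: "d dvd m" using assms(4) unfolding m_def .
  have "d > 0" using dm \<open>m>0\<close> by (auto intro: dvd_pos_nat)
  define g where "g = gcd n m"
  have qd: "q div d = q0 * (m div d)" using q dm by (simp add: div_mult_swap)
  show ?thesis
  proof (cases "d dvd n")
    case False
    have "g dvd n" unfolding g_def by simp
    hence "d \<noteq> g" using False by auto
    hence cond: "d \<noteq> gcd n (q div q0)" unfolding g_def m_def .
    have "xi d (induced_char \<psi> (q div d)) n = 0" using False unfolding xi_def by simp
    thus ?thesis by (subst if_not_P[OF cond])
  next
    case True
    have "d dvd g" unfolding g_def using True dm by simp
    show ?thesis
    proof (cases "d = g")
      case True
      have cop: "coprime (n div g) (m div g)" unfolding g_def using \<open>m>0\<close> by (intro div_gcd_coprime) auto
      have "\<psi> (n div g) * principal_char (q0 * (m div g)) (n div g) = \<psi> (n div g)"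
      proof (cases "coprime (n div g) q0")
        case True
        thus ?thesis using cop by (simp add: principal_char_def)
      next
        case False
        hence "\<psi> (n div g) = 0" using dc_basic(4)[OF dc, of "n div g"] by blast
        thus ?thesis by simp
      qed
      hence X: "xi d (induced_char \<psi> (q div d)) n = \<psi> (n div d)"
        unfolding xi_def induced_char_def using True \<open>d dvd n\<close> qd by simp
      have cond: "d = gcd n (q div q0)" using True unfolding g_def m_def .
      show ?thesis by (subst if_P[OF cond]) (rule X)
    next
      case False
      have gd: "g = d * (g div d)" using \<open>d dvd g\<close> by simp
      have "g div d \<noteq> 1" using False gd by auto
      have "g dvd n" "g dvd m" unfolding g_def by simp_all
      have "g div d dvd n div d" using \<open>g dvd n\<close> \<open>d dvd g\<close> dvd_trans[OF \<open>d dvd g\<close> \<open>g dvd n\<close>] by simp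
      moreover have "g div d dvd m div d" using \<open>g dvd m\<close> \<open>d dvd g\<close> dm by simp
      hence "g div d dvd q0 * (m div d)" by (simp add: dvd_mult)
      ultimately have "\<not> coprime (n div d) (q0 * (m div d))"
        using \<open>g div d \<noteq> 1\<close> coprime_common_divisor_nat by blast
      hence "principal_char (q div d) (n div d) = 0" using qd by (simp add: principal_char_def)
      hence "xi d (induced_char \<psi> (q div d)) n = 0"
        unfolding xi_def induced_char_def using \<open>d dvd n\<close> by simp
      moreover have cond: "d \<noteq> gcd n (q div q0)" using False unfolding g_def m_def .
      ultimately show ?thesis by (subst if_not_P[OF cond])
    qed
  qed
qed

lemma inE_iff:
  assumes dc: "dirichlet_char q0 \<psi>" and "q0 dvd q" "q > 0"
  shows "in_E q q0 \<psi> f \<longleftrightarrow>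
    (\<exists>c. \<forall>n\<ge>1. f n = c (gcd n (q div q0)) * \<psi> (n div gcd n (q div q0)))"
proof -
  define m where "m = q div q0"
  have "q = q0 * m" using assms(2) unfolding m_def by simp
  hence "m > 0" using \<open>q>0\<close> by (cases "m = 0") auto
  have eq: "(\<Sum>d | d dvd m. c d * xi d (induced_char \<psi> (q div d)) n)
        = c (gcd n m) * \<psi> (n div gcd n m)" if "n \<ge> 1" for c n
  proof -
    have "(\<Sum>d | d dvd m. c d * xi d (induced_char \<psi> (q div d)) n)
        = (\<Sum>d | d dvd m. if d = gcd n m then c d * \<psi> (n div d) else 0)"
    proof (intro sum.cong refl)
      fix d assume "d \<in> {d. d dvd m}"
      hence "d dvd q div q0" unfolding m_def by simp
      from xi_eval[OF assms this that]
      show "c d * xi d (induced_char \<psi> (q div d)) n = (if d = gcd n m then c d * \<psi> (n div d) else 0)"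
        unfolding m_def by simp
    qed
    also have "\<dots> = c (gcd n m) * \<psi> (n div gcd n m)"
      using \<open>m > 0\<close> by (simp add: sum.delta)
    finally show ?thesis .
  qed
  have "in_E q q0 \<psi> f \<longleftrightarrow> (\<exists>c. \<forall>n\<ge>1. f n = (\<Sum>d | d dvd m. c d * xi d (induced_char \<psi> (q div d)) n))"
    unfolding in_E_def m_def ..
  also have "\<dots> \<longleftrightarrow> (\<exists>c. \<forall>n\<ge>1. f n = c (gcd n m) * \<psi> (n div gcd n m))"
    using eq by (intro ex_cong1 all_cong1) auto
  finally show ?thesis unfolding m_def .
qed

lemma P1_iff_P2:
  assumes dc: "dirichlet_char q0 \<psi>" and "q0 dvd q" "q > 0"
  shows "in_E q q0 \<psi> f \<longleftrightarrow>
    (\<forall>n\<ge>1. f n = f (gcd n (q div q0)) * \<psi> (n div gcd n (q div q0)))"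
proof -
  define m where "m = q div q0"
  have "q = q0 * m" using assms(2) unfolding m_def by simp
  hence "m > 0" using \<open>q>0\<close> by (cases "m = 0") auto
  have "(\<exists>c. \<forall>n\<ge>1. f n = c (gcd n m) * \<psi> (n div gcd n m)) \<longleftrightarrow>
        (\<forall>n\<ge>1. f n = f (gcd n m) * \<psi> (n div gcd n m))"
  proof
    assume "\<exists>c. \<forall>n\<ge>1. f n = c (gcd n m) * \<psi> (n div gcd n m)"
    then obtain c where c: "\<forall>n\<ge>1. f n = c (gcd n m) * \<psi> (n div gcd n m)" by blast
    show "\<forall>n\<ge>1. f n = f (gcd n m) * \<psi> (n div gcd n m)"
    proof (intro allI impI)
      fix n :: nat assume "n \<ge> 1"
      have "gcd n m > 0" using \<open>m>0\<close> by simp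
      hence "gcd n m \<ge> 1" by linarith
      hence "f (gcd n m) = c (gcd (gcd n m) m) * \<psi> (gcd n m div gcd (gcd n m) m)" using c by blast
      also have "\<dots> = c (gcd n m)" using dc_basic(1)[OF dc] \<open>gcd n m > 0\<close> by simp
      finally have *: "f (gcd n m) = c (gcd n m)" .
      have "f n = c (gcd n m) * \<psi> (n div gcd n m)" using c \<open>n \<ge> 1\<close> by blast
      thus "f n = f (gcd n m) * \<psi> (n div gcd n m)" by (simp only: *)
    qed
  qed blast
  thus ?thesis using inE_iff[OF assms, of f] unfolding m_def by argo
qed


lemma dconv_supp:
  assumes dc: "dirichlet_char q0 \<psi>" and H: "\<And>d. \<not> d dvd m \<Longrightarrow> H d = 0" and "n > 0" "m > 0"
  shows "dconv \<psi> H n = \<psi> (n div gcd n m) * dconv \<psi> H (gcd n m)"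
proof -
  define g where "g = gcd n m"
  have "g > 0" using assms unfolding g_def by simp
  have "g dvd n" unfolding g_def by simp
  have "dconv \<psi> H n = (\<Sum>d | d dvd g. \<psi> (n div d) * H d)"
    unfolding dconv_def
  proof (rule sum.mono_neutral_right)
    show "finite {d. d dvd n}" using \<open>n>0\<close> by simp
    show "{d. d dvd g} \<subseteq> {d. d dvd n}" using \<open>g dvd n\<close> by (auto intro: dvd_trans)
    show "\<forall>i\<in>{d. d dvd n} - {d. d dvd g}. \<psi> (n div i) * H i = 0"
      using H unfolding g_def by auto
  qed
  also have "\<dots> = (\<Sum>d | d dvd g. \<psi> (n div g) * (\<psi> (g div d) * H d))"
  proof (intro sum.cong refl)
    fix d assume "d \<in> {d. d dvd g}"
    hence "d dvd g" "d > 0" using \<open>g > 0\<close> by (auto intro: dvd_pos_nat)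
    hence "n div d = (n div g) * (g div d)" using div_split \<open>g dvd n\<close> by blast
    thus "\<psi> (n div d) * H d = \<psi> (n div g) * (\<psi> (g div d) * H d)"
      using dc_basic(2)[OF dc] by simp
  qed
  also have "\<dots> = \<psi> (n div g) * dconv \<psi> H g"
    unfolding dconv_def by (simp add: sum_distrib_left)
  finally show ?thesis unfolding g_def .
qed

lemma P2_iff_P3:
  assumes dc: "dirichlet_char q0 \<psi>" and "q0 dvd q" "q > 0"
  shows "(\<forall>n\<ge>1. f n = f (gcd n (q div q0)) * \<psi> (n div gcd n (q div q0))) \<longleftrightarrow>
         (\<forall>n\<ge>1. \<not> n dvd (q div q0) \<longrightarrow> dconv f (\<lambda>k. mobius_mu k * \<psi> k) n = 0)"
proof -
  define m where "m = q div q0"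
  have "q = q0 * m" using assms(2) unfolding m_def by simp
  hence "m > 0" using \<open>q>0\<close> by (cases "m = 0") auto
  define H where "H = dconv f (\<lambda>k. mobius_mu k * \<psi> k)"
  have "(\<forall>n\<ge>1. f n = f (gcd n m) * \<psi> (n div gcd n m)) \<longleftrightarrow> (\<forall>n\<ge>1. \<not> n dvd m \<longrightarrow> H n = 0)"
  proof
    assume P2: "\<forall>n\<ge>1. f n = f (gcd n m) * \<psi> (n div gcd n m)"
    define a where "a = (\<lambda>d. if d dvd m then H d else 0)"
    have a0: "a d = 0" if "\<not> d dvd m" for d using that unfolding a_def by simp
    have rep: "f n = dconv \<psi> a n" if "n > 0" for n
    proof -
      have gpos: "gcd n m > 0" using \<open>m > 0\<close> by simp
      have "dconv \<psi> a n = \<psi> (n div gcd n m) * dconv \<psi> a (gcd n m)"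
        by (rule dconv_supp[OF dc a0 that \<open>m>0\<close>])
      also have "dconv \<psi> a (gcd n m) = dconv \<psi> H (gcd n m)"
        unfolding a_def by (intro dconv_cong refl) (auto intro: dvd_trans)
      also have "\<dots> = f (gcd n m)" unfolding H_def by (rule inv1[OF dc gpos])
      finally show ?thesis using P2 that by (simp add: mult.commute)
    qed
    show "\<forall>n\<ge>1. \<not> n dvd m \<longrightarrow> H n = 0"
    proof (intro allI impI)
      fix n :: nat assume "n \<ge> 1" "\<not> n dvd m"
      have "H n = a n" unfolding H_def by (rule inv2[OF dc]) (use rep \<open>n\<ge>1\<close> in auto)
      thus "H n = 0" using a0 \<open>\<not> n dvd m\<close> by simp
    qed
  next
    assume P3: "\<forall>n\<ge>1. \<not> n dvd m \<longrightarrow> H n = 0"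
    have H0: "H d = 0" if "\<not> d dvd m" for d
    proof (cases "d = 0")
      case True thus ?thesis unfolding H_def dconv_def by simp
    next
      case False thus ?thesis using P3 that by simp
    qed
    show "\<forall>n\<ge>1. f n = f (gcd n m) * \<psi> (n div gcd n m)"
    proof (intro allI impI)
      fix n :: nat assume "n \<ge> 1"
      hence "n > 0" by simp
      have gpos: "gcd n m > 0" using \<open>m > 0\<close> by simp
      have "f n = dconv \<psi> H n" unfolding H_def by (rule inv1[OF dc \<open>n>0\<close>, symmetric])
      also have "\<dots> = \<psi> (n div gcd n m) * dconv \<psi> H (gcd n m)"
        by (rule dconv_supp[OF dc H0 \<open>n>0\<close> \<open>m>0\<close>])
      also have "dconv \<psi> H (gcd n m) = f (gcd n m)" unfolding H_def by (rule inv1[OF dc gpos])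
      finally show "f n = f (gcd n m) * \<psi> (n div gcd n m)" by (simp add: mult.commute)
    qed
  qed
  thus ?thesis unfolding m_def H_def .
qed


lemma norm_nat_powr: "norm (of_nat (Suc n) powr s :: complex) = real (Suc n) powr Re s"
  by (subst norm_powr_real_powr) auto

lemma ds_summable:
  assumes "\<forall>n\<ge>1. norm (b n) \<le> B" "Re s > 1"
  shows "summable (\<lambda>n. norm (b (Suc n) / of_nat (Suc n) powr s))"
proof (rule summable_comparison_test')
  have "summable (\<lambda>n. real n powr (- Re s))" using assms(2) by (subst summable_real_powr_iff) simp
  hence "summable (\<lambda>n. real (Suc n) powr (- Re s))" by (subst summable_Suc_iff)
  thus "summable (\<lambda>n. B * real (Suc n) powr (- Re s))" by (rule summable_mult)
next
  fix n :: nat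
  have "norm (of_nat (Suc n) powr s :: complex) = real (Suc n) powr Re s" by (rule norm_nat_powr)
  hence "norm (norm (b (Suc n) / of_nat (Suc n) powr s)) = norm (b (Suc n)) / real (Suc n) powr Re s"
    by (simp add: norm_divide)
  also have "\<dots> \<le> B / real (Suc n) powr Re s"
    using assms(1) by (intro divide_right_mono) auto
  also have "\<dots> = B * real (Suc n) powr (- Re s)" by (simp add: powr_minus divide_inverse)
  finally show "norm (norm (b (Suc n) / of_nat (Suc n) powr s)) \<le> B * real (Suc n) powr (- Re s)" .
qed

lemma ds_sums:
  assumes "\<forall>n\<ge>1. norm (b n) \<le> B" "Re s > 1"
  shows "(\<lambda>n. b (Suc n) / of_nat (Suc n) powr s) sums dseries b s"
  unfolding dseries_def using summable_norm_cancel[OF ds_summable[OF assms]] by (rule summable_sums)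

lemma ds_prod:
  assumes psiB: "\<forall>n. norm (\<psi> n) \<le> B" and a0: "\<And>d. d > N \<Longrightarrow> a d = 0" and s: "Re s > 1"
  shows "dseries (dconv \<psi> a) s = dpoly a N s * dseries \<psi> s"
proof -
  define L where "L = dseries \<psi> s"
  have L: "(\<lambda>n. \<psi> (Suc n) / of_nat (Suc n) powr s) sums L"
    unfolding L_def using psiB s by (intro ds_sums) auto
  define e where "e = (\<lambda>d k. if d dvd Suc k then a d * \<psi> (Suc k div d) / of_nat (Suc k) powr s else 0)"
  have ed: "e d sums (a d / of_nat d powr s * L)" if d: "d \<in> {1..N}" for d
  proof -
    have "d > 0" using d by auto
    define g where "g = (\<lambda>n. d * n + (d - 1))"
    have sm: "strict_mono g"
    proof (rule strict_monoI)
      fix x y :: nat assume "x < y"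
      hence "d*x < d*y" using \<open>d>0\<close> by simp
      thus "g x < g y" unfolding g_def by arith
    qed
    have gS: "Suc (g n) = d * Suc n" for n unfolding g_def using \<open>d>0\<close> by (cases d) auto
    have zero: "e d n = 0" if "n \<notin> range g" for n
    proof (rule ccontr)
      assume "e d n \<noteq> 0"
      hence "d dvd Suc n" unfolding e_def by (auto split: if_splits)
      then obtain j where j: "Suc n = d * j" by (elim dvdE)
      hence "j > 0" by (cases j) auto
      then obtain i where "j = Suc i" by (cases j) auto
      hence "Suc n = Suc (g i)" using j gS by simp
      hence "n = g i" by simp
      thus False using that by auto
    qed
    have "(\<lambda>n. e d (g n)) = (\<lambda>n. a d / of_nat d powr s * (\<psi> (Suc n) / of_nat (Suc n) powr s))"
    proof
      fix n
      have "of_nat (Suc (g n)) powr s = (of_nat d powr s * of_nat (Suc n) powr s :: complex)"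
        unfolding gS of_nat_mult by (rule powr_times_real) auto
      moreover have "Suc (g n) div d = Suc n" unfolding gS using \<open>d>0\<close> by simp
      moreover have "d dvd Suc (g n)" unfolding gS by simp
      ultimately show "e d (g n) = a d / of_nat d powr s * (\<psi> (Suc n) / of_nat (Suc n) powr s)"
        unfolding e_def by simp
    qed
    moreover have "(\<lambda>n. a d / of_nat d powr s * (\<psi> (Suc n) / of_nat (Suc n) powr s)) sums (a d / of_nat d powr s * L)"
      by (rule sums_mult[OF L])
    ultimately have "(\<lambda>n. e d (g n)) sums (a d / of_nat d powr s * L)" by simp
    thus ?thesis using sums_mono_reindex[OF sm, of "e d"] zero by blast
  qed
  have "(\<lambda>k. \<Sum>d\<in>{1..N}. e d k) sums (\<Sum>d\<in>{1..N}. a d / of_nat d powr s * L)"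
    by (rule sums_sum) (rule ed)
  moreover have "(\<Sum>d\<in>{1..N}. a d / of_nat d powr s * L) = dpoly a N s * L"
    unfolding dpoly_def by (simp add: sum_distrib_right)
  moreover have "(\<Sum>d\<in>{1..N}. e d k) = dconv \<psi> a (Suc k) / of_nat (Suc k) powr s" for k
  proof -
    have "(\<Sum>d\<in>{1..N}. e d k) = (\<Sum>d \<in> {d \<in> {1..N}. d dvd Suc k}. a d * \<psi> (Suc k div d) / of_nat (Suc k) powr s)"
      unfolding e_def by (rule sum.inter_filter[symmetric]) simp
    also have "\<dots> = (\<Sum>d | d dvd Suc k. a d * \<psi> (Suc k div d) / of_nat (Suc k) powr s)"
    proof (rule sum.mono_neutral_left)
      show "finite {d. d dvd Suc k}" by simp
      show "{d \<in> {1..N}. d dvd Suc k} \<subseteq> {d. d dvd Suc k}" by auto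
      show "\<forall>i\<in>{d. d dvd Suc k} - {d \<in> {1..N}. d dvd Suc k}. a i * \<psi> (Suc k div i) / of_nat (Suc k) powr s = 0"
      proof
        fix i assume i: "i \<in> {d. d dvd Suc k} - {d \<in> {1..N}. d dvd Suc k}"
        hence "i > 0" by (auto intro: dvd_pos_nat)
        hence "i > N" using i by auto
        thus "a i * \<psi> (Suc k div i) / of_nat (Suc k) powr s = 0" using a0 by simp
      qed
    qed
    also have "\<dots> = dconv \<psi> a (Suc k) / of_nat (Suc k) powr s"
      unfolding dconv_def by (simp add: sum_divide_distrib mult.commute)
    finally show ?thesis .
  qed
  ultimately have "(\<lambda>k. dconv \<psi> a (Suc k) / of_nat (Suc k) powr s) sums (dpoly a N s * L)" by simp
  thus ?thesis unfolding dseries_def L_def by (rule sums_unique[symmetric])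
qed


lemma inv_sq_summable: "summable (\<lambda>i. 1 / real (Suc i) ^ 2)"
proof -
  have "summable (\<lambda>i. inverse (real i ^ 2))" by (rule inverse_power_summable) simp
  hence "summable (\<lambda>i. inverse (real (Suc i) ^ 2))" by (subst summable_Suc_iff)
  thus ?thesis by (simp add: divide_inverse)
qed

lemma ds_unique:
  assumes bB: "\<forall>n\<ge>1. norm (b n) \<le> B" and z: "\<forall>k\<ge>2. dseries b (of_nat k) = 0"
  shows "\<forall>n\<ge>1. b n = 0"
proof -
  have B0: "B \<ge> 0" using bB by (metis norm_ge_zero order_trans order_refl)
  define W where "W = (\<Sum>i. 1 / real (Suc i) ^ 2)"
  have Tsums: "(\<lambda>i. b (Suc i) / of_nat (Suc i) ^ k) sums 0" if "k \<ge> 2" for k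
  proof -
    have "(\<lambda>i. b (Suc i) / of_nat (Suc i) powr (of_nat k)) sums dseries b (of_nat k)"
      using bB that by (intro ds_sums) auto
    moreover have "of_nat (Suc i) powr (of_nat k) = (of_nat (Suc i) ^ k :: complex)" for i
      by (rule powr_complexpow) (simp only: of_nat_eq_0_iff nat.distinct(2) not_False_eq_True)
    ultimately show ?thesis using z that by simp
  qed
  show ?thesis
  proof (intro allI impI)
    fix n :: nat
    show "n \<ge> 1 \<Longrightarrow> b n = 0"
    proof (induction n rule: less_induct)
      case (less n)
      have key: "norm (b n) \<le> B * W * real n ^ 2 * (real n / real (n+1)) ^ j" for j
      proof -
        define k where "k = j + 2"
        define T where "T = (\<lambda>i. b (Suc i) / of_nat (Suc i) ^ k)"
        have "T sums 0" unfolding T_def k_def by (rule Tsums) simp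
        hence sh: "(\<lambda>i. T (i + n)) sums (- (\<Sum>i<n. T i))"
          by (subst sums_iff_shift) simp
        obtain n' where n': "n = Suc n'" using less.prems by (cases n) auto
        have "(\<Sum>i<n. T i) = (\<Sum>i<n'. T i) + T n'" unfolding n' by simp
        moreover have "(\<Sum>i<n'. T i) = 0"
          using less.IH n' unfolding T_def by (intro sum.neutral) auto
        ultimately have sT: "(\<Sum>i<n. T i) = b n / of_nat n ^ k" unfolding T_def n' by simp
        define c where "c = B / real (n+1) ^ j"
        have bound: "norm (T (i + n)) \<le> c * (1 / real (Suc i) ^ 2)" for i
        proof -
          have "real (n+1) ^ j * real (Suc i) ^ 2 \<le> real (Suc (i+n)) ^ j * real (Suc (i+n)) ^ 2"
            by (intro mult_mono power_mono) auto
          also have "\<dots> = real (Suc (i+n)) ^ k" unfolding k_def by (simp add: power_add power2_eq_square)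
          finally have le: "real (n+1) ^ j * real (Suc i) ^ 2 \<le> real (Suc (i+n)) ^ k" .
          have "norm (T (i + n)) = norm (b (Suc (i+n))) / real (Suc (i+n)) ^ k"
            unfolding T_def by (simp only: norm_divide norm_power norm_of_nat)
          also have "\<dots> \<le> B / real (Suc (i+n)) ^ k"
            using bB by (intro divide_right_mono) auto
          also have "\<dots> \<le> B / (real (n+1) ^ j * real (Suc i) ^ 2)"
            using le B0 by (intro divide_left_mono) auto
          also have "\<dots> = c * (1 / real (Suc i) ^ 2)" unfolding c_def by simp
          finally show ?thesis .
        qed
        have sw: "summable (\<lambda>i. c * (1 / real (Suc i) ^ 2))" by (intro summable_mult inv_sq_summable)
        have sn: "summable (\<lambda>i. norm (T (i + n)))"
          by (rule summable_comparison_test'[OF sw]) (use bound in auto)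
        have "norm (b n / of_nat n ^ k) = norm (\<Sum>i. T (i + n))"
          using sums_unique[OF sh] sT by (metis norm_minus_cancel)
        also have "\<dots> \<le> (\<Sum>i. norm (T (i + n)))" by (rule summable_norm[OF sn])
        also have "\<dots> \<le> (\<Sum>i. c * (1 / real (Suc i) ^ 2))"
          by (rule suminf_le[OF bound sn sw])
        also have "\<dots> = c * W" unfolding W_def by (rule suminf_mult[OF inv_sq_summable])
        finally have "norm (b n) / real n ^ k \<le> c * W" by (simp only: norm_divide norm_power norm_of_nat)
        hence "norm (b n) \<le> c * W * real n ^ k" using less.prems by (simp add: divide_le_eq)
        also have "c * W * real n ^ k = B * W * real n ^ 2 * (real n / real (n+1)) ^ j"
          unfolding c_def k_def by (simp add: power_add power_divide field_simps power2_eq_square)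
        finally show ?thesis .
      qed
      have "(\<lambda>j. B * W * real n ^ 2 * (real n / real (n+1)) ^ j) \<longlonglongrightarrow> B * W * real n ^ 2 * 0"
        by (intro tendsto_mult_left LIMSEQ_power_zero) auto
      hence "norm (b n) \<le> B * W * real n ^ 2 * 0"
        by (rule LIMSEQ_le_const) (use key in auto)
      thus "b n = 0" by simp
    qed
  qed
qed


lemma cop_mod_transfer:
  fixes t u M :: nat
  assumes "t mod M = u mod M" "coprime u M" "M > 0"
  shows "coprime t M"
  using assms by (metis coprime_mod_left_iff less_not_refl)

lemma exists_lift:
  fixes u M L :: nat
  assumes "M > 0" "L > 0" "coprime u M"
  shows "\<exists>t. t > 0 \<and> t mod M = u mod M \<and> coprime t L"
proof -
  define S where "S = {p \<in> prime_factors L. \<not> p dvd u}"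
  define X where "X = \<Prod>S"
  have finS: "finite S" unfolding S_def by simp
  have X0: "X > 0" unfolding X_def using finS
    by (intro prod_pos) (auto simp: S_def intro: prime_gt_0_nat)
  define t where "t = u + M * X"
  have "t > 0" unfolding t_def using X0 assms(1) by simp
  moreover have "t mod M = u mod M" unfolding t_def by simp
  moreover have "coprime t L"
  proof (rule ccontr)
    assume "\<not> coprime t L"
    then obtain c where c: "c dvd t" "c dvd L" "\<not> is_unit c" by (elim not_coprimeE)
    then obtain p where p: "prime p" "p dvd c" using prime_factor_nat[of c] by auto
    have pt: "p dvd t" and pL: "p dvd L" using p c dvd_trans by blast+
    show False
    proof (cases "p dvd u")
      case True
      have "\<not> p dvd M"
      proof
        assume "p dvd M"
        hence "is_unit p" using True assms(3) coprime_common_divisor by blast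
        thus False using p by simp
      qed
      moreover have "\<not> p dvd X"
      proof
        assume "p dvd X"
        then obtain r where r: "r \<in> S" "p dvd r" using prime_dvd_prod_iff[OF finS p(1)] unfolding X_def by auto
        have "prime r" "\<not> r dvd u" using r(1) unfolding S_def by auto
        hence "p = r" using r(2) p(1) primes_dvd_imp_eq by blast
        thus False using True \<open>\<not> r dvd u\<close> by simp
      qed
      ultimately have "\<not> p dvd M * X" using p(1) prime_dvd_mult_iff by blast
      moreover have "p dvd M * X" using pt True unfolding t_def by (simp add: dvd_add_right_iff)
      ultimately show False by contradiction
    next
      case False
      have "p \<in> S" unfolding S_def using False pL p(1) assms(2) by (auto simp: in_prime_factors_iff)
      hence "p dvd X" unfolding X_def using finS by (intro dvd_prodI) auto
      hence "p dvd M * X" by simp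
      hence "p dvd u" using pt unfolding t_def by (simp add: dvd_add_left_iff)
      thus False using False by contradiction
    qed
  qed
  ultimately show ?thesis by blast
qed


lemma fA:
  assumes dc: "dirichlet_char q0 \<psi>" and rep: "\<forall>n>0. f n = dconv \<psi> a n"
    and a0: "\<forall>d>N. a d = 0" and "k > 0" "t > 0" "coprime t (fact N)"
  shows "f (k*t) = \<psi> t * f k"
proof -
  have "f (k*t) = (\<Sum>d | d dvd k*t. \<psi> (k*t div d) * a d)"
    using rep assms(4,5) unfolding dconv_def by simp
  also have "\<dots> = (\<Sum>d | d dvd k. \<psi> (k*t div d) * a d)"
  proof (rule sum.mono_neutral_right)
    show "finite {d. d dvd k*t}" using assms(4,5) by simp
    show "{d. d dvd k} \<subseteq> {d. d dvd k*t}" by auto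
    show "\<forall>i\<in>{d. d dvd k*t} - {d. d dvd k}. \<psi> (k*t div i) * a i = 0"
    proof
      fix d assume d: "d \<in> {d. d dvd k*t} - {d. d dvd k}"
      have "a d = 0"
      proof (cases "d > N")
        case True thus ?thesis using a0 by simp
      next
        case False
        have "d > 0" using d assms(4,5) dvd_pos_nat[of "k*t" d] by simp
        hence "d dvd fact N" using False by (intro dvd_fact) auto
        then obtain r where "fact N = d * r" by (elim dvdE)
        hence "coprime t (d * r)" using assms(6) by simp
        hence "coprime t d" using coprime_mult_right_iff by blast
        hence "coprime d t" by (simp add: coprime_commute)
        hence "d dvd k" using d by (simp add: coprime_dvd_mult_left_iff)
        thus ?thesis using d by simp
      qed
      thus "\<psi> (k*t div d) * a d = 0" by simp
    qed
  qed
  also have "\<dots> = (\<Sum>d | d dvd k. \<psi> t * (\<psi> (k div d) * a d))"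
  proof (intro sum.cong refl)
    fix d assume "d \<in> {d. d dvd k}"
    hence "k*t div d = (k div d) * t" by (simp add: dvd_div_mult)
    thus "\<psi> (k*t div d) * a d = \<psi> t * (\<psi> (k div d) * a d)" using dc_basic(2)[OF dc] by simp
  qed
  also have "\<dots> = \<psi> t * f k" using rep assms(4) unfolding dconv_def by (simp add: sum_distrib_left)
  finally show ?thesis .
qed

lemma char_descend:
  assumes dc: "dirichlet_char q0 \<psi>" and e: "e dvd q0" "e > 0"
    and H: "\<forall>w>0. coprime w q0 \<longrightarrow> w mod e = 1 mod e \<longrightarrow> \<psi> w = 1"
  shows "\<exists>\<psi>'. dirichlet_char e \<psi>' \<and> induces e \<psi>' q0 \<psi>"
proof -
  have q0: "q0 > 0" using dc_basic(3)[OF dc] .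
  have wd: "\<psi> t1 = \<psi> t2" if "coprime t1 q0" "coprime t2 q0" "t1 mod e = t2 mod e" for t1 t2
  proof (cases "q0 = 1")
    case True thus ?thesis using dc_cong[OF dc] by simp
  next
    case False
    have "t1 > 0" "t2 > 0" using that False by (auto intro!: gr0I)
    obtain x y where xy: "t2 * x = q0 * y + gcd t2 q0" using bezout_nat[of t2 q0] \<open>t2 > 0\<close> by auto
    hence xy': "t2 * x = q0 * y + 1" using that(2) by simp
    have "x > 0" using xy' by (auto intro!: gr0I)
    have m1: "(t2 * x) mod q0 = 1 mod q0" unfolding xy' by (rule mod_mult_self4)
    hence "\<psi> (t2 * x) = \<psi> 1" by (rule dc_cong[OF dc])
    hence p2: "\<psi> (t2 * x) = 1" using dc_basic(1)[OF dc] by simp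
    have "coprime (t2 * x) q0" by (rule cop_mod_transfer[OF m1 coprime_1_left q0])
    hence cx: "coprime x q0" using coprime_mult_left_iff by blast
    have "(t1 * x) mod e = (t2 * x) mod e" using that(3) by (intro mod_mult_cong) auto
    also have "\<dots> = (t2 * x) mod q0 mod e" using e(1) by (simp add: mod_mod_cancel)
    also have "\<dots> = 1 mod e" unfolding m1 by (rule mod_mod_cancel[OF e(1)])
    finally have "\<psi> (t1 * x) = 1" using H that(1) cx \<open>t1 > 0\<close> \<open>x > 0\<close> by simp
    hence "\<psi> t1 * \<psi> x = \<psi> t2 * \<psi> x" using p2 dc_basic(2)[OF dc] by simp
    moreover have "\<psi> x \<noteq> 0" using cx dc_basic(4)[OF dc] by simp
    ultimately show ?thesis by simp
  qed
  have ex: "\<exists>t. t > 0 \<and> t mod e = n mod e \<and> coprime t q0" if "coprime n e" for n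
    using exists_lift[OF e(2) q0 that] .
  define lf where "lf = (\<lambda>n. SOME t. t > 0 \<and> t mod e = n mod e \<and> coprime t q0)"
  have lfP: "lf n mod e = n mod e \<and> coprime (lf n) q0" if "coprime n e" for n
    using someI_ex[OF ex[OF that]] unfolding lf_def by blast
  define \<psi>' where "\<psi>' = (\<lambda>n. if coprime n e then \<psi> (lf n) else 0)"
  have "dirichlet_char e \<psi>'"
    unfolding dirichlet_char_def
  proof (intro conjI allI)
    show "e > 0" by fact
  next
    fix a b :: nat
    show "\<psi>' (a * b) = \<psi>' a * \<psi>' b"
    proof (cases "coprime a e \<and> coprime b e")
      case True
      hence ab: "coprime (a*b) e" by simp
      have "lf (a*b) mod e = (a*b) mod e" using lfP[OF ab] by simp
      also have "\<dots> = (lf a * lf b) mod e" using lfP True by (intro mod_mult_cong) auto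
      finally have "\<psi> (lf (a*b)) = \<psi> (lf a * lf b)"
        using lfP True ab by (intro wd) auto
      thus ?thesis unfolding \<psi>'_def using True ab dc_basic(2)[OF dc] by simp
    next
      case False thus ?thesis unfolding \<psi>'_def by auto
    qed
  next
    fix n :: nat
    show "\<psi>' (n + e) = \<psi>' n"
    proof (cases "coprime n e")
      case True
      have c2: "coprime (n + e) e" by (rule cop_mod_transfer[OF mod_add_self2 True e(2)])
      have "lf (n+e) mod e = lf n mod e" using lfP[OF c2] lfP[OF True] by simp
      hence "\<psi> (lf (n+e)) = \<psi> (lf n)" using lfP[OF c2] lfP[OF True] by (intro wd) auto
      thus ?thesis unfolding \<psi>'_def using True c2 by simp
    next
      case False
      have "\<not> coprime (n + e) e"
      proof
        assume "coprime (n + e) e"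
        from cop_mod_transfer[OF mod_add_self2[symmetric] this e(2)] False show False by simp
      qed
      thus ?thesis using False unfolding \<psi>'_def by simp
    qed
  next
    fix n :: nat
    show "(\<psi>' n \<noteq> 0) = coprime n e"
      unfolding \<psi>'_def using lfP dc_basic(4)[OF dc] by auto
  qed
  moreover have "induces e \<psi>' q0 \<psi>"
    unfolding induces_def
  proof (intro conjI allI)
    show "e dvd q0" by fact
  next
    fix n :: nat
    show "\<psi> n = \<psi>' n * principal_char q0 n"
    proof (cases "coprime n q0")
      case True
      obtain r where r: "q0 = e * r" using e(1) by (elim dvdE)
      have ce: "coprime n e" using True unfolding r by simp
      have "\<psi> (lf n) = \<psi> n" using lfP[OF ce] True by (intro wd) auto
      thus ?thesis unfolding \<psi>'_def principal_char_def using ce True by simp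
    next
      case False
      hence "\<psi> n = 0" using dc_basic(4)[OF dc, of n] by blast
      thus ?thesis using False unfolding principal_char_def by simp
    qed
  qed
  ultimately show ?thesis by blast
qed


lemma fB:
  assumes prim: "primitive_char q0 \<psi>" and "q0 dvd q" "q > 0" and per: "periodic_arith q f"
    and Lpos: "L > 0" and A: "\<forall>k>0. \<forall>t>0. coprime t L \<longrightarrow> f (k*t) = \<psi> t * f k"
    and "k > 0" "f k \<noteq> 0"
  shows "q0 dvd q div gcd k q"
proof -
  have dc: "dirichlet_char q0 \<psi>" using prim unfolding primitive_char_def by blast
  have q0: "q0 > 0" using dc_basic(3)[OF dc] .
  define G where "G = gcd k q"
  define D where "D = q div G"
  have qGD: "q = G * D" unfolding D_def G_def by simp
  have "D > 0" using qGD \<open>q > 0\<close> by (cases "D = 0") auto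
  define e where "e = gcd q0 D"
  have claim: "\<psi> w = 1" if w: "w > 0" "coprime w q0" "w mod e = 1 mod e" for w
  proof -
    obtain x y where xy: "q0 * x = D * y + e" using bezout_nat[of q0 D] q0 unfolding e_def by auto
    have "e dvd w - 1" using w mod_eq_dvd_iff_nat[of 1 w e] by simp
    then obtain h where h: "w - 1 = e * h" by (elim dvdE)
    hence wh: "w = 1 + e * h" using w(1) by simp
    obtain D' where D': "D = Suc D'" using \<open>D > 0\<close> by (cases D) auto
    define t0 where "t0 = w + q0 * (x * h * D')"
    have t0q: "t0 mod q0 = w mod q0" unfolding t0_def by simp
    have "t0 = 1 + e * h + (D * y + e) * h * D'" unfolding t0_def wh using xy
      by (simp add: algebra_simps)
    also have "\<dots> = 1 + D * (y * h * D' + e * h)" unfolding D' by (simp add: algebra_simps)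
    finally have "t0 = 1 + D * (y * h * D' + e * h)" .
    hence t0D: "t0 mod D = 1 mod D" by (simp only: mod_mult_self2)
    have "coprime t0 q0" by (rule cop_mod_transfer[OF t0q w(2) q0])
    moreover have "coprime t0 D" by (rule cop_mod_transfer[OF t0D coprime_1_left \<open>D > 0\<close>])
    ultimately have "coprime t0 (q0 * D)" by simp
    then obtain t where t: "t > 0" "t mod (q0 * D) = t0 mod (q0 * D)" "coprime t L"
      using exists_lift[of "q0 * D" L t0] q0 \<open>D > 0\<close> Lpos by auto
    have tq0: "t mod q0 = w mod q0"
      using t(2) t0q by (metis mod_mod_cancel dvd_triv_left)
    have tD: "t mod D = 1 mod D"
      using t(2) t0D by (metis mod_mod_cancel dvd_triv_right)
    obtain k' where k': "k = G * k'" unfolding G_def by (metis dvdE gcd_dvd1)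
    have "(k' * t) mod D = (k' * 1) mod D" using tD by (intro mod_mult_cong) auto
    hence "G * ((k' * t) mod D) = G * (k' mod D)" by simp
    hence "(G * (k' * t)) mod (G * D) = (G * k') mod (G * D)" by (simp only: mult_mod_right)
    moreover have "k * t = G * (k' * t)" unfolding k' by (simp only: mult.assoc)
    ultimately have "(k * t) mod q = k mod q" unfolding qGD k' by simp
    hence "f (k * t) = f k" using per \<open>k > 0\<close> t(1) by (intro periodic_cong) (auto simp: Suc_le_eq)
    moreover have "f (k * t) = \<psi> t * f k" using A \<open>k > 0\<close> t by blast
    ultimately have "\<psi> t = 1" using \<open>f k \<noteq> 0\<close> by simp
    moreover have "\<psi> t = \<psi> w" by (rule dc_cong[OF dc tq0])
    ultimately show ?thesis by simp
  qed
  have "e dvd q0" "e > 0" unfolding e_def using q0 by auto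
  from char_descend[OF dc this] claim obtain \<psi>' where "dirichlet_char e \<psi>'" "induces e \<psi>' q0 \<psi>" by blast
  hence "e = q0" using prim \<open>e dvd q0\<close> unfolding primitive_char_def by blast
  hence "q0 dvd D" unfolding e_def by (metis gcd_dvd2)
  thus ?thesis unfolding D_def G_def .
qed

lemma hard:
  assumes prim: "primitive_char q0 \<psi>" and "q0 dvd q" "q > 0" and per: "periodic_arith q f"
    and rep: "\<forall>n>0. f n = dconv \<psi> a n" and a0: "\<forall>d>N. a d = 0"
  shows "\<forall>n\<ge>1. f n = f (gcd n (q div q0)) * \<psi> (n div gcd n (q div q0))"
proof (intro allI impI)
  have dc: "dirichlet_char q0 \<psi>" using prim unfolding primitive_char_def by blast
  have q0: "q0 > 0" using dc_basic(3)[OF dc] .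
  define L :: nat where "L = fact N"
  have Lpos: "L > 0" unfolding L_def by simp
  have A: "\<forall>k>0. \<forall>t>0. coprime t L \<longrightarrow> f (k*t) = \<psi> t * f k"
    unfolding L_def using fA[OF dc rep a0] by blast
  define m where "m = q div q0"
  have qm: "q = q0 * m" using assms(2) unfolding m_def by simp
  hence "m > 0" using \<open>q>0\<close> by (cases "m = 0") auto
  fix n :: nat assume "n \<ge> 1"
  hence "n > 0" by simp
  define g where "g = gcd n m"
  define u where "u = n div g"
  have "g > 0" unfolding g_def using \<open>m>0\<close> by simp
  have "g dvd m" "g dvd n" unfolding g_def by simp_all
  have ngu: "n = g * u" unfolding u_def using \<open>g dvd n\<close> by simp
  have "u > 0" using ngu \<open>n > 0\<close> by (cases "u = 0") auto
  have "f n = f g * \<psi> u"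
  proof (cases "coprime u q0")
    case True
    define Mg where "Mg = q0 * (m div g)"
    have qg: "q = g * Mg" unfolding Mg_def qm using \<open>g dvd m\<close> by (metis dvd_mult_div_cancel mult.left_commute)
    have "Mg > 0" using qg \<open>q > 0\<close> by (cases "Mg = 0") auto
    have "coprime u (m div g)" unfolding u_def g_def using \<open>m > 0\<close> by (intro div_gcd_coprime) auto
    hence "coprime u Mg" unfolding Mg_def using True by simp
    then obtain t where t: "t > 0" "t mod Mg = u mod Mg" "coprime t L"
      using exists_lift[OF \<open>Mg > 0\<close> Lpos] by blast
    have "(g * t) mod q = (g * u) mod q" unfolding qg
      by (metis mult_mod_right t(2))
    hence "f (g * t) = f (g * u)" using per t(1) \<open>u > 0\<close> \<open>g > 0\<close>
      by (intro periodic_cong) (auto simp: Suc_le_eq)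
    moreover have "f (g * t) = \<psi> t * f g" using A \<open>g > 0\<close> t by blast
    moreover have "t mod q0 = u mod q0" using t(2) unfolding Mg_def
      by (metis mod_mod_cancel dvd_triv_left)
    hence "\<psi> t = \<psi> u" by (rule dc_cong[OF dc])
    ultimately show ?thesis using ngu by (simp add: mult.commute)
  next
    case False
    hence "\<psi> u = 0" using dc_basic(4)[OF dc, of u] by blast
    have "f n = 0"
    proof (rule ccontr)
      assume "f n \<noteq> 0"
      define G where "G = gcd n q"
      have "q0 dvd q div G" unfolding G_def by (rule fB[OF prim assms(2,3) per Lpos A \<open>n>0\<close> \<open>f n \<noteq> 0\<close>])
      hence "q0 * G dvd (q div G) * G" by (rule mult_dvd_mono) simp
      also have "(q div G) * G = q0 * m" unfolding G_def qm[symmetric] by simp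
      finally have "G dvd m" using q0 by simp
      moreover have "G dvd n" unfolding G_def by simp
      ultimately have "G dvd g" unfolding g_def by simp
      obtain c where c: "c dvd u" "c dvd q0" "\<not> is_unit c" using False by (elim not_coprimeE)
      have "g * c dvd n" unfolding ngu using c(1) by simp
      moreover have "c * g dvd q0 * m" using c(2) \<open>g dvd m\<close> by (rule mult_dvd_mono)
      hence "g * c dvd q" unfolding qm by (simp add: mult.commute)
      ultimately have "g * c dvd G" unfolding G_def by simp
      hence "g * c dvd g * 1" using dvd_trans[OF _ \<open>G dvd g\<close>] by simp
      hence "c dvd 1" using \<open>g > 0\<close> by (subst (asm) nat_mult_dvd_cancel_disj) auto
      thus False using c(3) by simp
    qed
    thus ?thesis using \<open>\<psi> u = 0\<close> by simp
  qed
  thus "f n = f (gcd n (q div q0)) * \<psi> (n div gcd n (q div q0))" unfolding g_def u_def m_def .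
qed


lemma dconv_bounded:
  assumes psiB: "\<forall>n. norm (\<psi> n) \<le> B" and a0: "\<forall>d>N. a d = 0" and "a 0 = 0"
  shows "\<forall>n\<ge>1. norm (dconv \<psi> a n) \<le> (\<Sum>d\<in>{1..N}. B * norm (a d))"
proof (intro allI impI)
  fix n :: nat assume "n \<ge> 1"
  have B0: "B \<ge> 0" using psiB by (metis norm_ge_zero order_trans)
  define h where "h = (\<lambda>d. B * norm (a d))"
  have h0: "h d \<ge> 0" for d unfolding h_def using B0 by simp
  have fin: "finite {d. d dvd n}" using \<open>n \<ge> 1\<close> by simp
  have "norm (dconv \<psi> a n) \<le> (\<Sum>d | d dvd n. norm (\<psi> (n div d) * a d))"
    unfolding dconv_def by (rule norm_sum)
  also have "\<dots> \<le> (\<Sum>d | d dvd n. h d)"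
    unfolding h_def by (intro sum_mono) (use psiB in \<open>auto simp: norm_mult intro: mult_right_mono\<close>)
  also have "\<dots> \<le> (\<Sum>d \<in> {d. d dvd n} \<union> {1..N}. h d)"
    by (rule sum_mono2) (use fin h0 in auto)
  also have "\<dots> = (\<Sum>d\<in>{1..N}. h d)"
  proof (rule sum.mono_neutral_right)
    show "finite ({d. d dvd n} \<union> {1..N})" using fin by simp
    show "{1..N} \<subseteq> {d. d dvd n} \<union> {1..N}" by auto
    show "\<forall>i\<in>{d. d dvd n} \<union> {1..N} - {1..N}. h i = 0"
    proof
      fix i assume "i \<in> {d. d dvd n} \<union> {1..N} - {1..N}"
      hence "i = 0 \<or> i > N" by auto
      thus "h i = 0" unfolding h_def using a0 assms(3) by auto
    qed
  qed
  finally show "norm (dconv \<psi> a n) \<le> (\<Sum>d\<in>{1..N}. B * norm (a d))" unfolding h_def .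
qed

lemma dseries_cong:
  assumes "\<forall>n>0. f n = g n"
  shows "dseries f s = dseries g s"
  unfolding dseries_def using assms by simp

theorem lemma2p2:
  fixes q q0 :: nat and f \<psi> :: "nat \<Rightarrow> complex"
  assumes "q \<ge> 1"
    and "periodic_arith q f"
    and "q0 dvd q" and "primitive_char q0 \<psi>"
  shows "(in_E q q0 \<psi> f
            \<longleftrightarrow> (\<forall>n\<ge>1. f n = f (gcd n (q div q0)) * \<psi> (n div gcd n (q div q0))))
       \<and> (in_E q q0 \<psi> f
            \<longleftrightarrow> (\<forall>n\<ge>1. \<not> n dvd (q div q0) \<longrightarrow> dconv f (\<lambda>k. mobius_mu k * \<psi> k) n = 0))
       \<and> (in_E q q0 \<psi> f
            \<longleftrightarrow> (\<exists>a N. \<forall>s. Re s > 1 \<longrightarrow> dseries f s = dpoly a N s * dseries \<psi> s))"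
proof -
  have dc: "dirichlet_char q0 \<psi>" using assms(4) unfolding primitive_char_def by blast
  have qpos: "q > 0" using assms(1) by simp
  note P12 = P1_iff_P2[OF dc assms(3) qpos, of f]
  note P23 = P2_iff_P3[OF dc assms(3) qpos, of f]
  define m where "m = q div q0"
  have qm: "q = q0 * m" using assms(3) unfolding m_def by simp
  hence "m > 0" using qpos by (cases "m = 0") auto
  obtain B where psiB: "\<forall>n. norm (\<psi> n) \<le> B" using dc_bounded[OF dc] by blast
  obtain Bf where fB: "\<forall>n\<ge>1. norm (f n) \<le> Bf" using periodic_bounded[OF assms(2,1)] by blast
  have P4: "in_E q q0 \<psi> f \<longleftrightarrow> (\<exists>a N. \<forall>s. Re s > 1 \<longrightarrow> dseries f s = dpoly a N s * dseries \<psi> s)"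
  proof
    assume "in_E q q0 \<psi> f"
    hence P3: "\<forall>n\<ge>1. \<not> n dvd m \<longrightarrow> dconv f (\<lambda>k. mobius_mu k * \<psi> k) n = 0"
      using P12 P23 unfolding m_def by blast
    define H where "H = dconv f (\<lambda>k. mobius_mu k * \<psi> k)"
    have H0: "H d = 0" if "d > m" for d
    proof -
      have "\<not> d dvd m" using that \<open>m > 0\<close> by (auto dest: dvd_imp_le)
      thus ?thesis using P3 that unfolding H_def by auto
    qed
    have rep: "\<forall>n>0. f n = dconv \<psi> H n" unfolding H_def using inv1[OF dc] by simp
    have "dseries f s = dpoly H m s * dseries \<psi> s" if "Re s > 1" for s
    proof -
      have "dseries f s = dseries (dconv \<psi> H) s" by (rule dseries_cong[OF rep])
      also have "\<dots> = dpoly H m s * dseries \<psi> s" by (rule ds_prod[OF psiB H0 that])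
      finally show ?thesis .
    qed
    thus "\<exists>a N. \<forall>s. Re s > 1 \<longrightarrow> dseries f s = dpoly a N s * dseries \<psi> s" by blast
  next
    assume "\<exists>a N. \<forall>s. Re s > 1 \<longrightarrow> dseries f s = dpoly a N s * dseries \<psi> s"
    then obtain a N where aN: "\<forall>s. Re s > 1 \<longrightarrow> dseries f s = dpoly a N s * dseries \<psi> s" by blast
    define a' where "a' = (\<lambda>d. if 1 \<le> d \<and> d \<le> N then a d else 0)"
    have a'0: "\<forall>d>N. a' d = 0" "a' 0 = 0" unfolding a'_def by auto
    have dp: "dpoly a' N s = dpoly a N s" for s unfolding dpoly_def a'_def by (intro sum.cong) auto
    define g where "g = dconv \<psi> a'"
    obtain Bg where gB: "\<forall>n\<ge>1. norm (g n) \<le> Bg"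
      using dconv_bounded[OF psiB a'0] unfolding g_def by blast
    define b where "b = (\<lambda>n. f n - g n)"
    have bB: "\<forall>n\<ge>1. norm (b n) \<le> Bf + Bg"
      unfolding b_def using fB gB by (auto intro: order_trans[OF norm_triangle_ineq4] add_mono)
    have "dseries b (of_nat k) = 0" if "k \<ge> 2" for k :: nat
    proof -
      let ?s = "of_nat k :: complex"
      have s: "Re ?s > 1" using that by simp
      have sf: "summable (\<lambda>n. f (Suc n) / of_nat (Suc n) powr ?s)"
        by (rule summable_norm_cancel[OF ds_summable[OF fB s]])
      have sg: "summable (\<lambda>n. g (Suc n) / of_nat (Suc n) powr ?s)"
        by (rule summable_norm_cancel[OF ds_summable[OF gB s]])
      have "dseries b ?s = dseries f ?s - dseries g ?s"
        unfolding dseries_def b_def using suminf_diff[OF sf sg] by (simp add: diff_divide_distrib)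
      also have "dseries g ?s = dpoly a' N ?s * dseries \<psi> ?s"
        unfolding g_def by (rule ds_prod[OF psiB _ s]) (use a'0 in auto)
      also have "dseries f ?s = dpoly a N ?s * dseries \<psi> ?s" using aN s by blast
      finally show ?thesis using dp by simp
    qed
    hence "\<forall>n\<ge>1. b n = 0" using ds_unique[OF bB] by blast
    hence rep: "\<forall>n>0. f n = dconv \<psi> a' n" unfolding b_def g_def by auto
    have "\<forall>n\<ge>1. f n = f (gcd n (q div q0)) * \<psi> (n div gcd n (q div q0))"
      by (rule hard[OF assms(4,3) qpos assms(2) rep a'0(1)])
    thus "in_E q q0 \<psi> f" using P12 by blast
  qed
  show ?thesis using P12 P23 P4 by blast
qed


end
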